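(* Through four general points of $\mathbb{P}^2$ there pass exactly six Hesse configurations, i.e. there are exactly six Hesse configurations whose nine points include the four given points.
   Context: A Hesse configuration is a set of nine points in $\mathbb{P}^2$ that is the set of inflection points of a smooth plane cubic; equivalently, nine points together with twelve lines, each containing three of the points, such that the line through any two of the nine points contains a third one. *)

theory Defs
  imports "HOL-Analysis.Analysis"
begin

typedef P2 = "{L :: (complex^3) set. \<exists>v. v \<noteq> 0 \<and> L = {c *s v | c. True}}"
proof -
  have "(1 :: complex^3) \<noteq> 0" by simp
  then show ?thesis by blast
qed

definition det3 :: "complex^3 \<Rightarrow> complex^3 \<Rightarrow> complex^3 \<Rightarrow> complex" where
  "det3 u v w = det (\<chi> i. if i = 1 then u else if i = 2 then v else w :: complex^3^3)"

text \<open>Three points of P^2 are collinear iff nonzero representatives are linearly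
dependent (vanishing determinant); independent of the chosen representatives.\<close>
definition collinear_P2 :: "P2 \<Rightarrow> P2 \<Rightarrow> P2 \<Rightarrow> bool" where
  "collinear_P2 p q r \<longleftrightarrow>
     (\<exists>u v w. u \<in> Rep_P2 p \<and> v \<in> Rep_P2 q \<and> w \<in> Rep_P2 r \<and>
              u \<noteq> 0 \<and> v \<noteq> 0 \<and> w \<noteq> 0 \<and> det3 u v w = 0)"

text \<open>Hesse configuration: nine points such that the line through any two of them
contains exactly three of the nine points (hence twelve lines, each with three of
the points, and the line through any two points contains a third).\<close>
definition hesse_config :: "P2 set \<Rightarrow> bool" where
  "hesse_config S \<longleftrightarrow> finite S \<and> card S = 9 \<and>
     (\<forall>p\<in>S. \<forall>q\<in>S. p \<noteq> q \<longrightarrow> card {r\<in>S. collinear_P2 p q r} = 3)"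

end

theory Submission
  imports Defs
begin

definition vec3 :: "complex \<Rightarrow> complex \<Rightarrow> complex \<Rightarrow> complex^3" where
  "vec3 x y z = vector [x,y,z]"

lemma vec3_comp[simp]: "vec3 x y z $ 1 = x" "vec3 x y z $ 2 = y" "vec3 x y z $ 3 = z"
  by (simp_all add: vec3_def)

lemma det3_explicit: "det3 u v w =
   u$1 * v$2 * w$3 - u$1 * v$3 * w$2 - u$2 * v$1 * w$3 + u$2 * v$3 * w$1 + u$3 * v$1 * w$2 - u$3 * v$2 * w$1"
  unfolding det3_def det_3 by (simp add: algebra_simps)

lemma vec3_eq_iff: "(u::complex^3) = v \<longleftrightarrow> u$1 = v$1 \<and> u$2 = v$2 \<and> u$3 = v$3"
  by (simp add: vec_eq_iff forall_3)

definition pt :: "complex^3 \<Rightarrow> P2" where "pt v = Abs_P2 {c *s v | c. True}"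

lemma Rep_pt: "v \<noteq> 0 \<Longrightarrow> Rep_P2 (pt v) = {c *s v | c. True}"
  unfolding pt_def by (rule Abs_P2_inverse) blast

lemma P2_cases: obtains v where "v \<noteq> 0" "p = pt v"
proof -
  obtain v where v: "v \<noteq> 0" "Rep_P2 p = {c *s v | c. True}" using Rep_P2[of p] by blast
  then have "p = pt v" unfolding pt_def by (metis Rep_P2_inverse)
  with v that show ?thesis by blast
qed

lemma pt_eq: assumes "u \<noteq> 0" "v \<noteq> 0" shows "pt u = pt v \<longleftrightarrow> (\<exists>c. u = c *s v)"
proof
  assume "pt u = pt v"
  then have "{c *s u | c. True} = {c *s v | c. True}" using Rep_pt assms by metis
  moreover have "u \<in> {c *s u | c. True}" by (rule CollectI, rule exI[of _ 1], simp)
  ultimately show "\<exists>c. u = c *s v" by blast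
next
  assume "\<exists>c. u = c *s v"
  then obtain c where c: "u = c *s v" by blast
  with assms have c0: "c \<noteq> 0" by auto
  have "{k *s u | k. True} = {k *s v | k. True}"
  proof (intro set_eqI iffI)
    fix x assume "x \<in> {k *s u | k. True}"
    then obtain k where "x = k *s u" by blast
    then have "x = (k*c) *s v" using c by simp
    then show "x \<in> {k *s v | k. True}" by blast
  next
    fix x assume "x \<in> {k *s v | k. True}"
    then obtain k where "x = k *s v" by blast
    then have "x = (k/c) *s u" using c c0 by (simp add: vec_eq_iff)
    then show "x \<in> {k *s u | k. True}" by blast
  qed
  then show "pt u = pt v" unfolding pt_def by simp
qed

lemma det3_smult: "det3 (a *s u) (b *s v) (c *s w) = a*b*c*det3 u v w"
  by (simp add: det3_explicit algebra_simps)

lemma coll_pt: assumes "u \<noteq> 0" "v \<noteq> 0" "w \<noteq> 0"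
  shows "collinear_P2 (pt u) (pt v) (pt w) \<longleftrightarrow> det3 u v w = 0"
proof
  assume "collinear_P2 (pt u) (pt v) (pt w)"
  then obtain u' v' w' where h: "u' \<in> Rep_P2 (pt u)" "v' \<in> Rep_P2 (pt v)" "w' \<in> Rep_P2 (pt w)"
     "u' \<noteq> 0" "v' \<noteq> 0" "w' \<noteq> 0" "det3 u' v' w' = 0" unfolding collinear_P2_def by blast
  then obtain a b c where abc: "u' = a *s u" "v' = b *s v" "w' = c *s w" using Rep_pt assms by auto
  then have "a \<noteq> 0" "b \<noteq> 0" "c \<noteq> 0" using h by auto
  then show "det3 u v w = 0" using h(7) abc det3_smult by simp
next
  assume "det3 u v w = 0"
  moreover have "x \<in> Rep_P2 (pt x)" if "x \<noteq> 0" for x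
    using Rep_pt[OF that] by (auto intro!: exI[of _ 1])
  ultimately show "collinear_P2 (pt u) (pt v) (pt w)" unfolding collinear_P2_def using assms by blast
qed

definition par :: "complex^3 \<Rightarrow> complex^3 \<Rightarrow> bool" where
  "par u v \<longleftrightarrow> u$1 * v$2 = u$2 * v$1 \<and> u$1 * v$3 = u$3 * v$1 \<and> u$2 * v$3 = u$3 * v$2"

lemma nonzero3: "(v::complex^3) \<noteq> 0 \<longleftrightarrow> v$1 \<noteq> 0 \<or> v$2 \<noteq> 0 \<or> v$3 \<noteq> 0"
  by (auto simp: vec3_eq_iff)

lemma prop_iff_par: assumes "u \<noteq> 0" "v \<noteq> 0" shows "(\<exists>c. u = c *s v) \<longleftrightarrow> par u v"
proof
  assume "\<exists>c. u = c *s v" then show "par u v" by (auto simp: par_def)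
next
  assume p: "par u v"
  consider "v$1 \<noteq> 0" | "v$2 \<noteq> 0" | "v$3 \<noteq> 0" using assms(2) nonzero3 by blast
  then show "\<exists>c. u = c *s v"
  proof cases
    case 1 then show ?thesis using p
      by (intro exI[of _ "u$1 / v$1"]) (auto simp: vec3_eq_iff par_def field_simps)
  next
    case 2 then show ?thesis using p
      by (intro exI[of _ "u$2 / v$2"]) (auto simp: vec3_eq_iff par_def field_simps)
  next
    case 3 then show ?thesis using p
      by (intro exI[of _ "u$3 / v$3"]) (auto simp: vec3_eq_iff par_def field_simps)
  qed
qed

lemma pt_eq_par: "u \<noteq> 0 \<Longrightarrow> v \<noteq> 0 \<Longrightarrow> pt u = pt v \<longleftrightarrow> par u v"
  using pt_eq prop_iff_par by blast

abbreviation coll where "coll \<equiv> collinear_P2"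

lemma coll_sym: "coll p q r \<Longrightarrow> coll q p r" "coll p q r \<Longrightarrow> coll p r q"
proof -
  obtain u where "u\<noteq>0" "p = pt u" by (rule P2_cases)
  moreover obtain v where "v\<noteq>0" "q = pt v" by (rule P2_cases)
  moreover obtain w where "w\<noteq>0" "r = pt w" by (rule P2_cases)
  ultimately show "coll p q r \<Longrightarrow> coll q p r" "coll p q r \<Longrightarrow> coll p r q"
    by (auto simp: coll_pt det3_explicit algebra_simps)
qed

lemma coll_refl: "coll p p q" "coll p q p" "coll q p p"
proof -
  obtain u where "u\<noteq>0" "p = pt u" by (rule P2_cases)
  moreover obtain v where "v\<noteq>0" "q = pt v" by (rule P2_cases)
  ultimately show "coll p p q" "coll p q p" "coll q p p"
    by (auto simp: coll_pt det3_explicit algebra_simps)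
qed

lemma LU_vec:
  fixes u v x y z :: "complex^3"
  assumes "\<not> par u v" "det3 u v x = 0" "det3 u v y = 0" "det3 u v z = 0"
  shows "det3 x y z = 0"
proof -
  define n1 where "n1 = u$2* v$3 - u$3* v$2"
  define n2 where "n2 = u$3* v$1 - u$1* v$3"
  define n3 where "n3 = u$1* v$2 - u$2* v$1"
  have dx: "det3 u v w = n1 * w$1 + n2 * w$2 + n3 * w$3" for w
    unfolding n1_def n2_def n3_def det3_explicit by (simp add: algebra_simps)
  have "n1 \<noteq> 0 \<or> n2 \<noteq> 0 \<or> n3 \<noteq> 0" using assms(1) unfolding n1_def n2_def n3_def par_def
    by (auto simp: algebra_simps)
  moreover
  have i1: "det3 x y z * n1 = (n1 * x$1 + n2 * x$2 + n3 * x$3) * (y$2*z$3 - y$3*z$2)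
       + (n1 * y$1 + n2 * y$2 + n3 * y$3) * (z$2*x$3 - z$3*x$2)
       + (n1 * z$1 + n2 * z$2 + n3 * z$3) * (x$2*y$3 - x$3*y$2)"
    unfolding det3_explicit by (simp add: algebra_simps)
  have i2: "det3 x y z * n2 = (n1 * x$1 + n2 * x$2 + n3 * x$3) * (y$3*z$1 - y$1*z$3)
       + (n1 * y$1 + n2 * y$2 + n3 * y$3) * (z$3*x$1 - z$1*x$3)
       + (n1 * z$1 + n2 * z$2 + n3 * z$3) * (x$3*y$1 - x$1*y$3)"
    unfolding det3_explicit by (simp add: algebra_simps)
  have i3: "det3 x y z * n3 = (n1 * x$1 + n2 * x$2 + n3 * x$3) * (y$1*z$2 - y$2*z$1)
       + (n1 * y$1 + n2 * y$2 + n3 * y$3) * (z$1*x$2 - z$2*x$1)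
       + (n1 * z$1 + n2 * z$2 + n3 * z$3) * (x$1*y$2 - x$2*y$1)"
    unfolding det3_explicit by (simp add: algebra_simps)
  ultimately show ?thesis using assms(2-4) unfolding dx by (metis i1 i2 i3 mult_zero_left add_0 mult_eq_0_iff)
qed

lemma LU: assumes "p \<noteq> q" "coll p q x" "coll p q y" "coll p q z" shows "coll x y z"
proof -
  obtain u where "u\<noteq>0" "p = pt u" by (rule P2_cases)
  moreover obtain v where "v\<noteq>0" "q = pt v" by (rule P2_cases)
  moreover obtain a where "a\<noteq>0" "x = pt a" by (rule P2_cases)
  moreover obtain b where "b\<noteq>0" "y = pt b" by (rule P2_cases)
  moreover obtain c where "c\<noteq>0" "z = pt c" by (rule P2_cases)
  ultimately
  show ?thesis using assms LU_vec[of u v a b c] by (auto simp: coll_pt pt_eq_par)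
qed

definition lin :: "complex^3 \<Rightarrow> complex^3 \<Rightarrow> complex^3 \<Rightarrow> complex^3 \<Rightarrow> complex^3" where
  "lin A B C x = x$1 *s A + x$2 *s B + x$3 *s C"

lemma lin_comp: "lin A B C x $ i = x$1 * A$i + x$2 * B$i + x$3 * C$i"
  by (simp add: lin_def)

lemma det_lin: "det3 (lin A B C x) (lin A B C y) (lin A B C z) = det3 A B C * det3 x y z"
  unfolding det3_explicit lin_comp by (simp add: algebra_simps)

definition phi where "phi A B C x = pt (lin A B C x)"

lemma cramer1: "det3 (lin A B C x) B C = x$1 * det3 A B C"
  unfolding det3_explicit lin_comp by (simp add: algebra_simps)
lemma cramer2: "det3 A (lin A B C x) C = x$2 * det3 A B C"
  unfolding det3_explicit lin_comp by (simp add: algebra_simps)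
lemma cramer3: "det3 A B (lin A B C x) = x$3 * det3 A B C"
  unfolding det3_explicit lin_comp by (simp add: algebra_simps)

lemma det3_zero1: "det3 0 v w = 0" "det3 u 0 w = 0" "det3 u v 0 = 0"
  by (simp_all add: det3_explicit)

lemma lin_zero: assumes "det3 A B C \<noteq> 0" "lin A B C x = 0" shows "x = 0"
  using cramer1[of A B C x] cramer2[of A B C x] cramer3[of A B C x] assms
  by (auto simp: det3_zero1 vec3_eq_iff)

lemma cramer_id: "lin A B C (vec3 (det3 v B C) (det3 A v C) (det3 A B v)) = det3 A B C *s v"
  unfolding vec3_eq_iff lin_comp by (simp add: det3_explicit algebra_simps)

lemma lin_smult: "lin A B C (c *s x) = c *s lin A B C x"
  by (simp add: lin_def algebra_simps)

lemma lin_surj: assumes "det3 A B C \<noteq> 0"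
  shows "lin A B C ((1 / det3 A B C) *s vec3 (det3 v B C) (det3 A v C) (det3 A B v)) = v"
  unfolding lin_smult cramer_id using assms by simp

lemma phi_eq: assumes "det3 A B C \<noteq> 0" "x \<noteq> 0" "y \<noteq> 0"
  shows "phi A B C x = phi A B C y \<longleftrightarrow> par x y"
proof -
  have nz: "lin A B C x \<noteq> 0" "lin A B C y \<noteq> 0" using lin_zero assms by blast+
  have "phi A B C x = phi A B C y \<longleftrightarrow> (\<exists>c. lin A B C x = c *s lin A B C y)"
    unfolding phi_def using pt_eq nz by blast
  also have "\<dots> \<longleftrightarrow> (\<exists>c. x = c *s y)"
  proof
    assume "\<exists>c. lin A B C x = c *s lin A B C y"
    then obtain c where "lin A B C x = lin A B C (c *s y)" by (auto simp: lin_smult)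
    then have "lin A B C (x - c *s y) = 0" by (simp add: lin_def algebra_simps vec_eq_iff)
    then have "x - c *s y = 0" using lin_zero[OF assms(1)] by blast
    then show "\<exists>c. x = c *s y" by (intro exI[of _ c]) simp
  qed (auto simp: lin_smult)
  finally show ?thesis using prop_iff_par assms by blast
qed

lemma phi_coll: assumes "det3 A B C \<noteq> 0" "x \<noteq> 0" "y \<noteq> 0" "z \<noteq> 0"
  shows "coll (phi A B C x) (phi A B C y) (phi A B C z) \<longleftrightarrow> det3 x y z = 0"
proof -
  have nz: "lin A B C x \<noteq> 0" "lin A B C y \<noteq> 0" "lin A B C z \<noteq> 0" using lin_zero assms by blast+
  show ?thesis unfolding phi_def coll_pt[OF nz] det_lin using assms(1) by simp
qed

lemma phi_surj: assumes "det3 A B C \<noteq> 0" obtains x where "x \<noteq> 0" "p = phi A B C x"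
proof -
  obtain v where v: "v \<noteq> 0" "p = pt v" by (metis P2_cases)
  let ?x = "(1 / det3 A B C) *s vec3 (det3 v B C) (det3 A v C) (det3 A B v)"
  have "lin A B C ?x = v" by (rule lin_surj[OF assms])
  moreover have "?x \<noteq> 0"
  proof
    assume h: "?x = 0"
    have "lin A B C ?x = lin A B C 0" by (simp only: h)
    also have "\<dots> = 0" by (simp add: lin_def)
    finally have "lin A B C ?x = 0" .
    with \<open>lin A B C ?x = v\<close> v show False by simp
  qed
  ultimately show ?thesis using that v unfolding phi_def by metis
qed

lemma hesse_card: "hesse_config S \<Longrightarrow> finite S \<and> card S = 9"
  by (simp add: hesse_config_def)

lemma third: assumes "hesse_config S" "p \<in> S" "q \<in> S" "p \<noteq> q"
  obtains r where "r \<in> S" "r \<noteq> p" "r \<noteq> q" "coll p q r"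
proof -
  have c: "card {r\<in>S. coll p q r} = 3" using assms unfolding hesse_config_def by blast
  have "\<not> {r\<in>S. coll p q r} \<subseteq> {p,q}"
  proof
    assume "{r\<in>S. coll p q r} \<subseteq> {p,q}"
    then have "card {r\<in>S. coll p q r} \<le> card {p,q}" by (intro card_mono) auto
    also have "\<dots> \<le> 2" by (simp add: card_insert_if)
    finally show False using c by simp
  qed
  then show ?thesis using that by blast
qed

lemma lineset: assumes "hesse_config S" "p \<in> S" "q \<in> S" "r \<in> S" "p \<noteq> q" "p \<noteq> r" "q \<noteq> r"
  "coll p q r" shows "{s\<in>S. coll p q s} = {p,q,r}"
proof -
  have c: "card {s\<in>S. coll p q s} = 3" "finite S" using assms unfolding hesse_config_def by blast+
  have sub: "{p,q,r} \<subseteq> {s\<in>S. coll p q s}" using assms coll_refl by auto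
  have "card {p,q,r} = 3" using assms by simp
  then show ?thesis using card_subset_eq[OF _ sub] c by simp
qed

lemma on_line: assumes "hesse_config S" "p \<in> S" "q \<in> S" "r \<in> S" "p \<noteq> q" "p \<noteq> r" "q \<noteq> r"
  "coll p q r" "s \<in> S" "coll p q s" shows "s = p \<or> s = q \<or> s = r"
  using lineset[OF assms(1-8)] assms(9,10) by blast

lemma coll_perms:
  "coll p q r \<Longrightarrow> coll q p r" "coll p q r \<Longrightarrow> coll p r q" "coll p q r \<Longrightarrow> coll r p q"
  "coll p q r \<Longrightarrow> coll q r p" "coll p q r \<Longrightarrow> coll r q p"
  by (meson coll_sym)+

lemma pencil:
  assumes H: "hesse_config S"
    and K: "set [P,xa,ya,xb,yb,xc,yc] \<subseteq> S" "distinct [P,xa,ya,xb,yb,xc,yc]"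
    and l: "coll P xa ya" "coll P xb yb" "coll P xc yc"
    and uv: "u \<in> S" "v \<in> S" "u \<notin> set [P,xa,ya,xb,yb,xc,yc]" "v \<notin> set [P,xa,ya,xb,yb,xc,yc]" "u \<noteq> v"
  shows "coll P u v"
proof -
  let ?K = "set [P,xa,ya,xb,yb,xc,yc]"
  have fin: "finite S" "card S = 9" using H hesse_card by auto
  have cK: "card ?K = 7" using K(2) by (simp only: distinct_card) simp
  have cR: "card (S - ?K) = 2" using card_Diff_subset[OF _ K(1)] fin cK by simp
  have uP: "u \<noteq> P" using uv by auto
  obtain w where w: "w \<in> S" "w \<noteq> P" "w \<noteq> u" "coll P u w" using third[OF H _ uv(1) uP[symmetric]] K by auto
  have notl: False if "coll P a b" "a \<in> S" "b \<in> S" "P \<noteq> a" "P \<noteq> b" "a \<noteq> b" "a \<in> ?K" "b \<in> ?K" "w = a" for a b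
  proof -
    have "coll P a u" using coll_perms(2)[OF w(4)] that(9) by simp
    then have "u = P \<or> u = a \<or> u = b" using on_line[OF H _ that(2,3) that(4,5,6,1) uv(1)] K by auto
    then show False using uv that by auto
  qed
  have "w \<notin> ?K"
  proof
    assume "w \<in> ?K"
    then consider "w = xa" | "w = ya" | "w = xb" | "w = yb" | "w = xc" | "w = yc" using w by auto
    then show False
    proof cases
      case 1 then show ?thesis using notl[of xa ya] K l by auto
    next
      case 2 then show ?thesis using notl[of ya xa] K l coll_perms(2)[OF l(1)] by auto
    next
      case 3 then show ?thesis using notl[of xb yb] K l by auto
    next
      case 4 then show ?thesis using notl[of yb xb] K l coll_perms(2)[OF l(2)] by auto
    next
      case 5 then show ?thesis using notl[of xc yc] K l by auto
    next
      case 6 then show ?thesis using notl[of yc xc] K l coll_perms(2)[OF l(3)] by auto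
    qed
  qed
  have "w = v"
  proof (rule ccontr)
    assume "w \<noteq> v"
    then have "{u,v,w} \<subseteq> S - ?K" "card {u,v,w} = 3" using w uv \<open>w \<notin> ?K\<close> by auto
    then have "3 \<le> card (S - ?K)" using card_mono[of "S - ?K" "{u,v,w}"] fin by auto
    then show False using cR by simp
  qed
  then show ?thesis using w by simp
qed

lemma vec3_zero_iff[simp]: "vec3 x y z = 0 \<longleftrightarrow> x = 0 \<and> y = 0 \<and> z = 0"
  by (simp add: vec3_eq_iff)

lemma T_ne: assumes "coll p q X" "coll p r Y" "X \<noteq> p" "\<not> coll p q r" shows "X \<noteq> Y"
proof
  assume "X = Y"
  have 1: "coll p X q" using coll_perms(2)[OF assms(1)] .
  have 2: "coll p X r" using coll_perms(2)[OF assms(2)] \<open>X = Y\<close> by simp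
  have "coll q r p" using LU[OF assms(3)[symmetric] 1 2 coll_refl(2)] .
  then show False using assms(4) coll_perms(3) by blast
qed

context
  fixes A B C :: "complex^3"
  assumes D: "det3 A B C \<noteq> 0"
begin

lemma phi_coll3: "vec3 x1 x2 x3 \<noteq> 0 \<Longrightarrow> vec3 y1 y2 y3 \<noteq> 0 \<Longrightarrow> vec3 z1 z2 z3 \<noteq> 0 \<Longrightarrow>
  coll (phi A B C (vec3 x1 x2 x3)) (phi A B C (vec3 y1 y2 y3)) (phi A B C (vec3 z1 z2 z3)) \<longleftrightarrow>
   x1 * y2 * z3 - x1 * y3 * z2 - x2 * y1 * z3 + x2 * y3 * z1 + x3 * y1 * z2 - x3 * y2 * z1 = 0"
  using phi_coll[OF D] by (simp add: det3_explicit)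

lemma phi_eq3: "vec3 x1 x2 x3 \<noteq> 0 \<Longrightarrow> vec3 y1 y2 y3 \<noteq> 0 \<Longrightarrow>
  phi A B C (vec3 x1 x2 x3) = phi A B C (vec3 y1 y2 y3) \<longleftrightarrow>
   x1 * y2 = x2 * y1 \<and> x1 * y3 = x3 * y1 \<and> x2 * y3 = x3 * y2"
  using phi_eq[OF D] by (simp add: par_def)

lemma phi_coll_v: "x \<noteq> 0 \<Longrightarrow> vec3 x1 x2 x3 \<noteq> 0 \<Longrightarrow> vec3 y1 y2 y3 \<noteq> 0 \<Longrightarrow>
  coll (phi A B C (vec3 x1 x2 x3)) (phi A B C (vec3 y1 y2 y3)) (phi A B C x) \<longleftrightarrow>
   x1 * y2 * x$3 - x1 * y3 * x$2 - x2 * y1 * x$3 + x2 * y3 * x$1 + x3 * y1 * x$2 - x3 * y2 * x$1 = 0"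
  using phi_coll[OF D] by (simp add: det3_explicit)

lemma phi_eq_v: "x \<noteq> 0 \<Longrightarrow> vec3 y1 y2 y3 \<noteq> 0 \<Longrightarrow>
  phi A B C x = phi A B C (vec3 y1 y2 y3) \<longleftrightarrow>
   x$1 * y2 = x$2 * y1 \<and> x$1 * y3 = x$3 * y1 \<and> x$2 * y3 = x$3 * y2"
  using phi_eq[OF D] by (simp add: par_def)

lemma phi_vec3: obtains x1 x2 x3 where "vec3 x1 x2 x3 \<noteq> 0" "p = phi A B C (vec3 x1 x2 x3)"
proof -
  obtain x where "x \<noteq> 0" "p = phi A B C x" using phi_surj[OF D] by blast
  moreover have "x = vec3 (x$1) (x$2) (x$3)" by (simp add: vec3_eq_iff)
  ultimately show ?thesis using that by metis
qed

lemma phi_scale: "c \<noteq> 0 \<Longrightarrow> vec3 x1 x2 x3 \<noteq> 0 \<Longrightarrow> phi A B C (vec3 (c*x1) (c*x2) (c*x3)) = phi A B C (vec3 x1 x2 x3)"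
  by (subst phi_eq3) (auto simp: algebra_simps)

end

context
  fixes A B C :: "complex^3"
  assumes D: "det3 A B C \<noteq> 0"
begin

lemma frame_nc:
  assumes "a = phi A B C (vec3 1 0 0)" "b = phi A B C (vec3 0 1 0)" "c = phi A B C (vec3 0 0 1)" "d = phi A B C (vec3 1 1 1)"
  shows "\<not> coll a b c" "\<not> coll a b d" "\<not> coll a c b" "\<not> coll a c d" "\<not> coll a d b" "\<not> coll a d c" "\<not> coll b a c" "\<not> coll b a d" "\<not> coll b c a" "\<not> coll b c d" "\<not> coll b d a" "\<not> coll b d c" "\<not> coll c a b" "\<not> coll c a d" "\<not> coll c b a" "\<not> coll c b d" "\<not> coll c d a" "\<not> coll c d b" "\<not> coll d a b" "\<not> coll d a c" "\<not> coll d b a" "\<not> coll d b c" "\<not> coll d c a" "\<not> coll d c b"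
  using assms by (simp_all add: phi_coll3[OF D])

lemma meet_ab_cd: assumes "coll (phi A B C (vec3 1 0 0)) (phi A B C (vec3 0 1 0)) X" "coll (phi A B C (vec3 0 0 1)) (phi A B C (vec3 1 1 1)) X"
  shows "X = phi A B C (vec3 1 1 0)"
proof -
  obtain x where x: "x \<noteq> 0" "X = phi A B C x" using phi_surj[OF D] by blast
  show ?thesis using assms unfolding x(2) by (simp add: phi_coll_v[OF D] x(1) phi_eq_v[OF D])
qed

lemma meet_ac_bd: assumes "coll (phi A B C (vec3 1 0 0)) (phi A B C (vec3 0 0 1)) X" "coll (phi A B C (vec3 0 1 0)) (phi A B C (vec3 1 1 1)) X"
  shows "X = phi A B C (vec3 1 0 1)"
proof -
  obtain x where x: "x \<noteq> 0" "X = phi A B C x" using phi_surj[OF D] by blast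
  show ?thesis using assms unfolding x(2) by (simp add: phi_coll_v[OF D] x(1) phi_eq_v[OF D])
qed

lemma meet_ad_bc: assumes "coll (phi A B C (vec3 1 0 0)) (phi A B C (vec3 1 1 1)) X" "coll (phi A B C (vec3 0 1 0)) (phi A B C (vec3 0 0 1)) X"
  shows "X = phi A B C (vec3 0 1 1)"
proof -
  obtain x where x: "x \<noteq> 0" "X = phi A B C x" using phi_surj[OF D] by blast
  show ?thesis using assms unfolding x(2) by (simp add: phi_coll_v[OF D] x(1) phi_eq_v[OF D])
qed

lemma pigeon:
  assumes H: "hesse_config S"
    and F: "phi A B C (vec3 1 0 0) \<in> S" "phi A B C (vec3 0 1 0) \<in> S" "phi A B C (vec3 0 0 1) \<in> S" "phi A B C (vec3 1 1 1) \<in> S"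
  shows "phi A B C (vec3 1 1 0) \<in> S \<or> phi A B C (vec3 1 0 1) \<in> S \<or> phi A B C (vec3 0 1 1) \<in> S"
proof (rule ccontr)
  assume E: "\<not> ?thesis"
  define a where "a = phi A B C (vec3 1 0 0)"
  define b where "b = phi A B C (vec3 0 1 0)"
  define c where "c = phi A B C (vec3 0 0 1)"
  define d where "d = phi A B C (vec3 1 1 1)"
  note nc = frame_nc[OF a_def b_def c_def d_def]
  have Fs: "a \<in> S" "b \<in> S" "c \<in> S" "d \<in> S" using F a_def b_def c_def d_def by auto
  have ne: "a \<noteq> b" "a \<noteq> c" "a \<noteq> d" "b \<noteq> c" "b \<noteq> d" "c \<noteq> d"
    by (simp_all add: a_def b_def c_def d_def phi_eq3[OF D])
  obtain Tab where Tab: "Tab \<in> S" "Tab \<noteq> a" "Tab \<noteq> b" "coll a b Tab"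
    using third[OF H Fs(1) Fs(2) ne(1)] by blast
  have Tab': "coll b a Tab" using coll_perms(1)[OF Tab(4)] .
  obtain Tac where Tac: "Tac \<in> S" "Tac \<noteq> a" "Tac \<noteq> c" "coll a c Tac"
    using third[OF H Fs(1) Fs(3) ne(2)] by blast
  have Tac': "coll c a Tac" using coll_perms(1)[OF Tac(4)] .
  obtain Tad where Tad: "Tad \<in> S" "Tad \<noteq> a" "Tad \<noteq> d" "coll a d Tad"
    using third[OF H Fs(1) Fs(4) ne(3)] by blast
  have Tad': "coll d a Tad" using coll_perms(1)[OF Tad(4)] .
  obtain Tbc where Tbc: "Tbc \<in> S" "Tbc \<noteq> b" "Tbc \<noteq> c" "coll b c Tbc"
    using third[OF H Fs(2) Fs(3) ne(4)] by blast
  have Tbc': "coll c b Tbc" using coll_perms(1)[OF Tbc(4)] .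
  obtain Tbd where Tbd: "Tbd \<in> S" "Tbd \<noteq> b" "Tbd \<noteq> d" "coll b d Tbd"
    using third[OF H Fs(2) Fs(4) ne(5)] by blast
  have Tbd': "coll d b Tbd" using coll_perms(1)[OF Tbd(4)] .
  obtain Tcd where Tcd: "Tcd \<in> S" "Tcd \<noteq> c" "Tcd \<noteq> d" "coll c d Tcd"
    using third[OF H Fs(3) Fs(4) ne(6)] by blast
  have Tcd': "coll d c Tcd" using coll_perms(1)[OF Tcd(4)] .
  have f1: "Tab \<noteq> c" using Tab(4) nc(1) by blast
  have f2: "Tab \<noteq> d" using Tab(4) nc(2) by blast
  have f3: "Tac \<noteq> b" using Tac(4) nc(3) by blast
  have f4: "Tac \<noteq> d" using Tac(4) nc(4) by blast
  have f5: "Tad \<noteq> b" using Tad(4) nc(5) by blast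
  have f6: "Tad \<noteq> c" using Tad(4) nc(6) by blast
  have f7: "Tbc \<noteq> a" using Tbc(4) nc(9) by blast
  have f8: "Tbc \<noteq> d" using Tbc(4) nc(10) by blast
  have f9: "Tbd \<noteq> a" using Tbd(4) nc(11) by blast
  have f10: "Tbd \<noteq> c" using Tbd(4) nc(12) by blast
  have f11: "Tcd \<noteq> a" using Tcd(4) nc(17) by blast
  have f12: "Tcd \<noteq> b" using Tcd(4) nc(18) by blast
  have n1: "Tab \<noteq> Tcd"
  proof
    assume h: "Tab = Tcd"
    have "Tab = phi A B C (vec3 1 1 0)" by (rule meet_ab_cd) (insert Tab(4) Tcd(4) h, simp_all add: a_def b_def c_def d_def)
    then show False using E Tab(1) by simp
  qed
  have n2: "Tac \<noteq> Tbd"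
  proof
    assume h: "Tac = Tbd"
    have "Tac = phi A B C (vec3 1 0 1)" by (rule meet_ac_bd) (insert Tac(4) Tbd(4) h, simp_all add: a_def b_def c_def d_def)
    then show False using E Tac(1) by simp
  qed
  have n3: "Tad \<noteq> Tbc"
  proof
    assume h: "Tad = Tbc"
    have "Tad = phi A B C (vec3 0 1 1)" by (rule meet_ad_bc) (insert Tad(4) Tbc(4) h, simp_all add: a_def b_def c_def d_def)
    then show False using E Tad(1) by simp
  qed
  have n4: "Tab \<noteq> Tac" by (rule T_ne[OF Tab(4) Tac(4) Tab(2) nc(1)])
  have n5: "Tab \<noteq> Tad" by (rule T_ne[OF Tab(4) Tad(4) Tab(2) nc(2)])
  have n6: "Tab \<noteq> Tbc" by (rule T_ne[OF Tab' Tbc(4) Tab(3) nc(7)])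
  have n7: "Tab \<noteq> Tbd" by (rule T_ne[OF Tab' Tbd(4) Tab(3) nc(8)])
  have n8: "Tac \<noteq> Tad" by (rule T_ne[OF Tac(4) Tad(4) Tac(2) nc(4)])
  have n9: "Tac \<noteq> Tbc" by (rule T_ne[OF Tac' Tbc' Tac(3) nc(13)])
  have n10: "Tac \<noteq> Tcd" by (rule T_ne[OF Tac' Tcd(4) Tac(3) nc(14)])
  have n11: "Tad \<noteq> Tbd" by (rule T_ne[OF Tad' Tbd' Tad(3) nc(19)])
  have n12: "Tad \<noteq> Tcd" by (rule T_ne[OF Tad' Tcd' Tad(3) nc(20)])
  have n13: "Tbc \<noteq> Tbd" by (rule T_ne[OF Tbc(4) Tbd(4) Tbc(2) nc(10)])
  have n14: "Tbc \<noteq> Tcd" by (rule T_ne[OF Tbc' Tcd(4) Tbc(3) nc(16)])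
  have n15: "Tbd \<noteq> Tcd" by (rule T_ne[OF Tbd' Tcd' Tbd(3) nc(22)])
  have dist: "distinct [Tab, Tac, Tad, Tbc, Tbd, Tcd]" using n1 n2 n3 n4 n5 n6 n7 n8 n9 n10 n11 n12 n13 n14 n15 by auto
  have sub: "set [Tab, Tac, Tad, Tbc, Tbd, Tcd] \<subseteq> S - {a,b,c,d}"
    using Tab Tac Tad Tbc Tbd Tcd f1 f2 f3 f4 f5 f6 f7 f8 f9 f10 f11 f12 by auto
  have fin: "finite S" "card S = 9" using H hesse_card by auto
  have "card {a,b,c,d} = 4" using ne by simp
  then have c5: "card (S - {a,b,c,d}) = 5" using card_Diff_subset[of "{a,b,c,d}" S] Fs fin by simp
  have "card (set [Tab, Tac, Tad, Tbc, Tbd, Tcd]) = 6" using dist by (simp only: distinct_card) simp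
  then show False using card_mono[OF _ sub] fin c5 by simp
qed

end

context
  fixes A B C :: "complex^3"
  assumes D: "det3 A B C \<noteq> 0"
begin

lemma double:
  assumes H: "hesse_config S"
    and F: "phi A B C (vec3 1 0 0) \<in> S" "phi A B C (vec3 0 1 0) \<in> S" "phi A B C (vec3 0 0 1) \<in> S" "phi A B C (vec3 1 1 1) \<in> S"
    and E: "phi A B C (vec3 1 1 0) \<in> S" "phi A B C (vec3 1 0 1) \<in> S"
  shows False
proof -
  define a where "a = phi A B C (vec3 1 0 0)"
  define b where "b = phi A B C (vec3 0 1 0)"
  define c where "c = phi A B C (vec3 0 0 1)"
  define d where "d = phi A B C (vec3 1 1 1)"
  define X where "X = phi A B C (vec3 1 1 0)"
  define Y where "Y = phi A B C (vec3 1 0 1)"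
  note defs = a_def b_def c_def d_def X_def Y_def
  have XY: "X \<noteq> Y" by (simp add: defs phi_eq3[OF D])
  obtain w where w: "w \<in> S" "w \<noteq> X" "w \<noteq> Y" "coll X Y w"
    using third[OF H _ _ XY] E X_def Y_def by blast
  have ncw: "\<not> coll X Y a" "\<not> coll X Y b" "\<not> coll X Y c" "\<not> coll X Y d"
    by (simp_all add: defs phi_coll3[OF D])
  have wne: "w \<noteq> a" "w \<noteq> b" "w \<noteq> c" "w \<noteq> d" using ncw w(4) by auto
  have dK: "distinct [X,a,b,c,d,Y,w]" using w wne by (simp add: defs phi_eq3[OF D])
  have dK2: "distinct [Y,a,c,b,d,X,w]" using w wne by (simp add: defs phi_eq3[OF D])
  have KS: "set [X,a,b,c,d,Y,w] \<subseteq> S" using F E w defs by auto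
  have KS2: "set [Y,a,c,b,d,X,w] \<subseteq> S" using F E w defs by auto
  have l1: "coll X a b" "coll X c d" "coll Y a c" "coll Y b d" by (simp_all add: defs phi_coll3[OF D])
  have l2: "coll Y X w" using coll_perms(1)[OF w(4)] .
  have fin: "finite S" "card S = 9" using H hesse_card by auto
  have cK: "card (set [X,a,b,c,d,Y,w]) = 7" using dK by (simp only: distinct_card) simp
  have cR: "card (S - set [X,a,b,c,d,Y,w]) = 2" using card_Diff_subset[OF _ KS] fin cK by simp
  then obtain u v where uv: "S - set [X,a,b,c,d,Y,w] = {u,v}" "u \<noteq> v" by (meson card_2_iff)
  have uvS: "u \<in> S" "v \<in> S" "u \<notin> set [X,a,b,c,d,Y,w]" "v \<notin> set [X,a,b,c,d,Y,w]" using uv(1) by blast+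
  have eqK: "set [Y,a,c,b,d,X,w] = set [X,a,b,c,d,Y,w]" by auto
  have "coll X u v" by (rule pencil[OF H KS dK l1(1) l1(2) w(4) uvS uv(2)])
  moreover have "coll Y u v" by (rule pencil[OF H KS2 dK2 l1(3) l1(4) l2 uvS(1,2) uvS(3,4)[folded eqK] uv(2)])
  ultimately have "coll u v X" "coll u v Y" using coll_perms(4) by blast+
  then have "Y = u \<or> Y = v \<or> Y = X"
    using on_line[OF H uvS(1,2) _ uv(2) _ _ \<open>coll u v X\<close> _ \<open>coll u v Y\<close>] uvS KS by auto
  then show False using uvS XY by auto
qed

end

context
  fixes A B C :: "complex^3"
  assumes D: "det3 A B C \<noteq> 0"
begin

lemma single:
  assumes H: "hesse_config S"
    and F: "phi A B C (vec3 1 0 0) \<in> S" "phi A B C (vec3 0 1 0) \<in> S" "phi A B C (vec3 0 0 1) \<in> S" "phi A B C (vec3 1 1 1) \<in> S"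
    and E: "phi A B C (vec3 1 1 0) \<in> S" "phi A B C (vec3 1 0 1) \<notin> S" "phi A B C (vec3 0 1 1) \<notin> S"
  shows "\<exists>p. p * p - p + 1 = 0 \<and> S = phi A B C ` {vec3 1 0 0, vec3 0 1 0, vec3 0 0 1, vec3 1 1 1,
     vec3 1 1 0, vec3 1 0 (1 - p), vec3 1 (1 - p) 1, vec3 p 1 1, vec3 0 1 p}"
proof -
  define a where "a = phi A B C (vec3 1 0 0)"
  define b where "b = phi A B C (vec3 0 1 0)"
  define c where "c = phi A B C (vec3 0 0 1)"
  define d where "d = phi A B C (vec3 1 1 1)"
  define X where "X = phi A B C (vec3 1 1 0)"
  note defs = a_def b_def c_def d_def X_def
  have Fs: "a \<in> S" "b \<in> S" "c \<in> S" "d \<in> S" using F defs by auto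
  have ne: "a \<noteq> b" "a \<noteq> c" "a \<noteq> d" "b \<noteq> c" "b \<noteq> d" "c \<noteq> d"
    by (simp_all add: defs phi_eq3[OF D])
  obtain Tac where Tac: "Tac \<in> S" "Tac \<noteq> a" "Tac \<noteq> c" "coll a c Tac" using third[OF H Fs(1) Fs(3) ne(2)] by blast
  obtain Tbd where Tbd: "Tbd \<in> S" "Tbd \<noteq> b" "Tbd \<noteq> d" "coll b d Tbd" using third[OF H Fs(2) Fs(4) ne(5)] by blast
  obtain Tad where Tad: "Tad \<in> S" "Tad \<noteq> a" "Tad \<noteq> d" "coll a d Tad" using third[OF H Fs(1) Fs(4) ne(3)] by blast
  obtain Tbc where Tbc: "Tbc \<in> S" "Tbc \<noteq> b" "Tbc \<noteq> c" "coll b c Tbc" using third[OF H Fs(2) Fs(3) ne(4)] by blast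
  obtain s where s: "Tac = phi A B C (vec3 1 0 s)"
  proof -
    obtain x where x: "x \<noteq> 0" "Tac = phi A B C x" using phi_surj[OF D] by blast
    have e: "x$2 = 0" using Tac(4) unfolding x(2) by (simp add: defs phi_coll_v[OF D] x(1))
    have "x$1 \<noteq> 0" using Tac(3) x(1) e unfolding x(2) by (auto simp: defs phi_eq_v[OF D] nonzero3)
    then have "Tac = phi A B C (vec3 1 0 (x$3 / x$1))" using e unfolding x(2) by (simp add: phi_eq_v[OF D] x(1))
    then show ?thesis using that by blast
  qed
  obtain t where t: "Tbd = phi A B C (vec3 1 t 1)"
  proof -
    obtain x where x: "x \<noteq> 0" "Tbd = phi A B C x" using phi_surj[OF D] by blast
    have e: "x$1 = x$3" using Tbd(4) unfolding x(2) by (simp add: defs phi_coll_v[OF D] x(1))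
    have "x$1 \<noteq> 0" using Tbd(2) x(1) e unfolding x(2) by (auto simp: defs phi_eq_v[OF D] nonzero3)
    then have "Tbd = phi A B C (vec3 1 (x$2 / x$1) 1)" using e unfolding x(2) by (simp add: phi_eq_v[OF D] x(1))
    then show ?thesis using that by blast
  qed
  obtain p where p: "Tad = phi A B C (vec3 p 1 1)"
  proof -
    obtain x where x: "x \<noteq> 0" "Tad = phi A B C x" using phi_surj[OF D] by blast
    have e: "x$2 = x$3" using Tad(4) unfolding x(2) by (simp add: defs phi_coll_v[OF D] x(1))
    have "x$2 \<noteq> 0" using Tad(2) x(1) e unfolding x(2) by (auto simp: defs phi_eq_v[OF D] nonzero3)
    then have "Tad = phi A B C (vec3 (x$1 / x$2) 1 1)" using e unfolding x(2) by (simp add: phi_eq_v[OF D] x(1))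
    then show ?thesis using that by blast
  qed
  obtain r where r: "Tbc = phi A B C (vec3 0 1 r)"
  proof -
    obtain x where x: "x \<noteq> 0" "Tbc = phi A B C x" using phi_surj[OF D] by blast
    have e: "x$1 = 0" using Tbc(4) unfolding x(2) by (simp add: defs phi_coll_v[OF D] x(1))
    have "x$2 \<noteq> 0" using Tbc(3) x(1) e unfolding x(2) by (auto simp: defs phi_eq_v[OF D] nonzero3)
    then have "Tbc = phi A B C (vec3 0 1 (x$3 / x$2))" using e unfolding x(2) by (simp add: phi_eq_v[OF D] x(1))
    then show ?thesis using that by blast
  qed
  have s0: "s \<noteq> 0" using Tac(2) by (simp add: s defs phi_eq3[OF D])
  have s1: "s \<noteq> 1" using Tac(1) E(2) s by auto
  have t1: "t \<noteq> 1" using Tbd(3) by (simp add: t defs phi_eq3[OF D])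
  have t0: "t \<noteq> 0" using Tbd(1) E(2) t by auto
  have p1: "p \<noteq> 1" using Tad(3) by (simp add: p defs phi_eq3[OF D])
  have p0: "p \<noteq> 0" using Tad(1) E(3) p by auto
  have r0: "r \<noteq> 0" using Tbc(2) by (simp add: r defs phi_eq3[OF D])
  have r1: "r \<noteq> 1" using Tbc(1) E(3) r by auto
  have dist: "distinct [a,b,c,d,X,Tac,Tbd,Tad,Tbc]"
    using s0 s1 t0 t1 p0 p1 r0 r1 by (simp add: s t p r defs phi_eq3[OF D])
  have sub: "set [a,b,c,d,X,Tac,Tbd,Tad,Tbc] \<subseteq> S" using Fs E(1) X_def Tac Tbd Tad Tbc by auto
  have fin: "finite S" "card S = 9" using H hesse_card by auto
  have c9: "card (set [a,b,c,d,X,Tac,Tbd,Tad,Tbc]) = 9" using dist by (simp only: distinct_card) simp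
  have Seq: "S = set [a,b,c,d,X,Tac,Tbd,Tad,Tbc]" using card_subset_eq[OF fin(1) sub] c9 fin by simp
  have "coll a b X" "coll a c Tac" "coll a d Tad" by (simp_all add: s t p r defs phi_coll3[OF D])
  note L = this
  have "coll a Tbd Tbc"
    by (rule pencil[where S=S and xa=b and ya=X and xb=c and yb=Tac and xc=d and yc=Tad, OF H _ _ L]) (insert dist sub, auto)
  then have e1: "t * r = 1" by (simp add: t r defs phi_coll3[OF D] algebra_simps)
  have "coll b a X" "coll b d Tbd" "coll b c Tbc" by (simp_all add: s t p r defs phi_coll3[OF D])
  note L = this
  have "coll b Tac Tad"
    by (rule pencil[where S=S and xa=a and ya=X and xb=d and yb=Tbd and xc=c and yc=Tbc, OF H _ _ L]) (insert dist sub, auto)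
  then have e2: "s * p = 1" by (simp add: s p defs phi_coll3[OF D] algebra_simps)
  have "coll c d X" "coll c a Tac" "coll c b Tbc" by (simp_all add: s t p r defs phi_coll3[OF D])
  note L = this
  have "coll c Tbd Tad"
    by (rule pencil[where S=S and xa=d and ya=X and xb=a and yb=Tac and xc=b and yc=Tbc, OF H _ _ L]) (insert dist sub, auto)
  then have e3: "t * p = 1" by (simp add: t p defs phi_coll3[OF D] algebra_simps)
  have "coll d c X" "coll d b Tbd" "coll d a Tad" by (simp_all add: s t p r defs phi_coll3[OF D])
  note L = this
  have "coll d Tac Tbc"
    by (rule pencil[where S=S and xa=c and ya=X and xb=b and yb=Tbd and xc=a and yc=Tad, OF H _ _ L]) (insert dist sub, auto)
  then have e4: "r + s = 1" by (simp add: s r defs phi_coll3[OF D] algebra_simps)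
  have rp: "r = p" using e1 e3 t0 by (metis mult_left_cancel)
  have sp: "s = 1 - p" using e4 rp by (simp add: algebra_simps)
  have ts: "t = s" using e2 e3 p0 by (metis mult_right_cancel)
  have pp: "p * p - p + 1 = 0" using e2 sp by (simp add: algebra_simps)
  show ?thesis
    by (rule exI[of _ p]) (simp add: pp Seq defs s t p r ts sp rp)
qed

end

definition om :: complex where "om = Complex (1/2) (sqrt 3 / 2)"

lemma om_sq: "om * om = om - 1"
  by (simp add: om_def complex_eq_iff field_simps)

type_synonym E = "int \<times> int"

fun ev :: "E \<Rightarrow> complex" where "ev (m, n) = of_int m + of_int n * om"

fun eadd :: "E \<Rightarrow> E \<Rightarrow> E" where "eadd (a, b) (c, d) = (a + c, b + d)"
fun esub :: "E \<Rightarrow> E \<Rightarrow> E" where "esub (a, b) (c, d) = (a - c, b - d)"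
fun emul :: "E \<Rightarrow> E \<Rightarrow> E" where "emul (a, b) (c, d) = (a * c - b * d, a * d + b * c + b * d)"

lemma ev_add: "ev (eadd x y) = ev x + ev y"
  by (cases x; cases y) (simp add: algebra_simps)
lemma ev_sub: "ev (esub x y) = ev x - ev y"
  by (cases x; cases y) (simp add: algebra_simps)
lemma ev_mul: "ev (emul x y) = ev x * ev y"
proof (cases x; cases y)
  fix a b c d assume xy: "x = (a, b)" "y = (c, d)"
  have "ev x * ev y = of_int (a*c) + of_int (a*d + b*c) * om + of_int (b*d) * (om * om)"
    by (simp add: xy algebra_simps)
  also have "\<dots> = ev (emul x y)" by (simp add: xy om_sq algebra_simps)
  finally show ?thesis by simp
qed

lemma ev_eq0: "ev x = 0 \<longleftrightarrow> x = (0, 0)"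
proof (cases x)
  case (Pair m n)
  have "Im (ev x) = of_int n * (sqrt 3 / 2)" by (simp add: Pair om_def)
  moreover have "Re (ev x) = of_int m + of_int n / 2" by (simp add: Pair om_def)
  ultimately show ?thesis using Pair by (auto simp: complex_eq_iff)
qed

lemma ev_inj: "ev x = ev y \<longleftrightarrow> x = y"
proof -
  have "ev x = ev y \<longleftrightarrow> ev (esub x y) = 0" by (simp add: ev_sub del: ev.simps)
  also have "\<dots> \<longleftrightarrow> esub x y = (0,0)" by (rule ev_eq0)
  also have "\<dots> \<longleftrightarrow> x = y" by (cases x; cases y) auto
  finally show ?thesis .
qed

type_synonym EV = "E \<times> E \<times> E"

fun evv :: "EV \<Rightarrow> complex^3" where "evv (x, y, z) = vec3 (ev x) (ev y) (ev z)"

fun detE :: "EV \<Rightarrow> EV \<Rightarrow> EV \<Rightarrow> E" where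
  "detE (u1, u2, u3) (v1, v2, v3) (w1, w2, w3) =
    esub (eadd (eadd (esub (esub (emul u1 (emul v2 w3)) (emul u1 (emul v3 w2))) (emul u2 (emul v1 w3)))
       (emul u2 (emul v3 w1))) (emul u3 (emul v1 w2))) (emul u3 (emul v2 w1))"

lemma det_evv: "det3 (evv u) (evv v) (evv w) = ev (detE u v w)"
  by (cases u; cases v; cases w) (simp add: det3_explicit ev_add ev_sub ev_mul del: ev.simps)

fun parE :: "EV \<Rightarrow> EV \<Rightarrow> bool" where
  "parE (u1, u2, u3) (v1, v2, v3) \<longleftrightarrow> emul u1 v2 = emul u2 v1 \<and> emul u1 v3 = emul u3 v1 \<and> emul u2 v3 = emul u3 v2"

lemma par_evv: "par (evv u) (evv v) \<longleftrightarrow> parE u v"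
  by (cases u; cases v) (simp add: par_def ev_inj[symmetric] ev_mul del: ev.simps)

lemma evv_zero: "evv u = 0 \<longleftrightarrow> u = ((0,0),(0,0),(0,0))"
  by (cases u) (simp add: ev_eq0 del: ev.simps)

context
  fixes A B C :: "complex^3"
  assumes D: "det3 A B C \<noteq> 0"
begin

lemma hesse_list:
  assumes nz: "\<forall>u\<in>set W. u \<noteq> ((0,0),(0,0),(0,0))"
    and np: "\<forall>u\<in>set W. \<forall>v\<in>set W. u \<noteq> v \<longrightarrow> \<not> parE u v"
    and dW: "distinct W" "length W = 9"
    and ln: "\<forall>u\<in>set W. \<forall>v\<in>set W. u \<noteq> v \<longrightarrow> length (filter (\<lambda>w. detE u v w = (0,0)) W) = 3"
  shows "hesse_config (phi A B C ` evv ` set W)"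
proof -
  let ?f = "\<lambda>u. phi A B C (evv u)"
  have img: "phi A B C ` evv ` set W = ?f ` set W" by auto
  have nz': "evv u \<noteq> 0" if "u \<in> set W" for u using nz that evv_zero by auto
  have inj: "inj_on ?f (set W)"
  proof (rule inj_onI)
    fix u v assume uv: "u \<in> set W" "v \<in> set W" "?f u = ?f v"
    then have "par (evv u) (evv v)" using phi_eq[OF D nz' nz'] by blast
    then show "u = v" using np uv par_evv by blast
  qed
  have card9: "card (?f ` set W) = 9" using card_image[OF inj] dW distinct_card by metis
  show ?thesis unfolding hesse_config_def img
  proof (intro conjI ballI impI)
    show "finite (?f ` set W)" by simp
    show "card (?f ` set W) = 9" by (rule card9)
    fix P Q assume PQ: "P \<in> ?f ` set W" "Q \<in> ?f ` set W" "P \<noteq> Q"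
    then obtain u v where uv: "u \<in> set W" "v \<in> set W" "P = ?f u" "Q = ?f v" by blast
    have "u \<noteq> v" using PQ(3) uv by auto
    have "{r \<in> ?f ` set W. coll P Q r} = ?f ` {w \<in> set W. detE u v w = (0,0)}"
    proof (intro set_eqI iffI)
      fix r assume "r \<in> {r \<in> ?f ` set W. coll P Q r}"
      then obtain w where w: "w \<in> set W" "r = ?f w" "coll P Q r" by blast
      then have "det3 (evv u) (evv v) (evv w) = 0" using phi_coll[OF D nz'[OF uv(1)] nz'[OF uv(2)] nz'[OF w(1)]] uv by simp
      then show "r \<in> ?f ` {w \<in> set W. detE u v w = (0,0)}" using w det_evv ev_eq0 by auto
    next
      fix r assume "r \<in> ?f ` {w \<in> set W. detE u v w = (0,0)}"
      then obtain w where w: "w \<in> set W" "r = ?f w" "detE u v w = (0,0)" by blast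
      then have "det3 (evv u) (evv v) (evv w) = 0" using det_evv ev_eq0 by simp
      then have "coll (?f u) (?f v) (?f w)" using phi_coll[OF D nz'[OF uv(1)] nz'[OF uv(2)] nz'[OF w(1)]] by simp
      then have "coll P Q r" using uv w by simp
      then show "r \<in> {r \<in> ?f ` set W. coll P Q r}" using w by blast
    qed
    also have "card \<dots> = card {w \<in> set W. detE u v w = (0,0)}"
      by (rule card_image) (rule inj_on_subset[OF inj], blast)
    also have "\<dots> = length (filter (\<lambda>w. detE u v w = (0,0)) W)"
      using distinct_card[OF distinct_filter[OF dW(1)]] by (simp add: set_filter)
    also have "\<dots> = 3" using ln uv \<open>u \<noteq> v\<close> by blast
    finally show "card {r \<in> ?f ` set W. coll P Q r} = 3" .
  qed
qed

end

definition W11 :: "EV list" where "W11 = [((1, 0), (0, 0), (0, 0)), ((0, 0), (1, 0), (0, 0)), ((0, 0), (0, 0), (1, 0)), ((1, 0), (1, 0), (1, 0)), ((1, 0), (1, 0), (0, 0)), ((1, 0), (0, 0), (1, -1)), ((1, 0), (1, -1), (1, 0)), ((0, 1), (1, 0), (1, 0)), ((0, 0), (1, 0), (0, 1))]"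



definition W12 :: "EV list" where "W12 = [((1, 0), (0, 0), (0, 0)), ((0, 0), (0, 0), (1, 0)), ((0, 0), (1, 0), (0, 0)), ((1, 0), (1, 0), (1, 0)), ((1, 0), (0, 0), (1, 0)), ((1, 0), (1, -1), (0, 0)), ((1, 0), (1, 0), (1, -1)), ((0, 1), (1, 0), (1, 0)), ((0, 0), (0, 1), (1, 0))]"

definition W13 :: "EV list" where "W13 = [((0, 0), (1, 0), (0, 0)), ((0, 0), (0, 0), (1, 0)), ((1, 0), (0, 0), (0, 0)), ((1, 0), (1, 0), (1, 0)), ((0, 0), (1, 0), (1, 0)), ((1, -1), (1, 0), (0, 0)), ((1, 0), (1, 0), (1, -1)), ((1, 0), (0, 1), (1, 0)), ((0, 1), (0, 0), (1, 0))]"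

definition W21 :: "EV list" where "W21 = [((1, 0), (0, 0), (0, 0)), ((0, 0), (1, 0), (0, 0)), ((0, 0), (0, 0), (1, 0)), ((1, 0), (1, 0), (1, 0)), ((1, 0), (1, 0), (0, 0)), ((1, 0), (0, 0), (0, 1)), ((1, 0), (0, 1), (1, 0)), ((1, -1), (1, 0), (1, 0)), ((0, 0), (1, 0), (1, -1))]"

definition W22 :: "EV list" where "W22 = [((1, 0), (0, 0), (0, 0)), ((0, 0), (0, 0), (1, 0)), ((0, 0), (1, 0), (0, 0)), ((1, 0), (1, 0), (1, 0)), ((1, 0), (0, 0), (1, 0)), ((1, 0), (0, 1), (0, 0)), ((1, 0), (1, 0), (0, 1)), ((1, -1), (1, 0), (1, 0)), ((0, 0), (1, -1), (1, 0))]"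

definition W23 :: "EV list" where "W23 = [((0, 0), (1, 0), (0, 0)), ((0, 0), (0, 0), (1, 0)), ((1, 0), (0, 0), (0, 0)), ((1, 0), (1, 0), (1, 0)), ((0, 0), (1, 0), (1, 0)), ((0, 1), (1, 0), (0, 0)), ((1, 0), (1, 0), (0, 1)), ((1, 0), (1, -1), (1, 0)), ((1, -1), (0, 0), (1, 0))]"

lemma W11_ok:
  "\<forall>u\<in>set W11. u \<noteq> ((0,0),(0,0),(0,0))"
  "\<forall>u\<in>set W11. \<forall>v\<in>set W11. u \<noteq> v \<longrightarrow> \<not> parE u v"
  "distinct W11" "length W11 = 9"
  "\<forall>u\<in>set W11. \<forall>v\<in>set W11. u \<noteq> v \<longrightarrow> length (filter (\<lambda>w. detE u v w = (0,0)) W11) = 3"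
  by (simp_all add: W11_def)

lemma W12_ok:
  "\<forall>u\<in>set W12. u \<noteq> ((0,0),(0,0),(0,0))"
  "\<forall>u\<in>set W12. \<forall>v\<in>set W12. u \<noteq> v \<longrightarrow> \<not> parE u v"
  "distinct W12" "length W12 = 9"
  "\<forall>u\<in>set W12. \<forall>v\<in>set W12. u \<noteq> v \<longrightarrow> length (filter (\<lambda>w. detE u v w = (0,0)) W12) = 3"
  by (simp_all add: W12_def)

lemma W13_ok:
  "\<forall>u\<in>set W13. u \<noteq> ((0,0),(0,0),(0,0))"
  "\<forall>u\<in>set W13. \<forall>v\<in>set W13. u \<noteq> v \<longrightarrow> \<not> parE u v"
  "distinct W13" "length W13 = 9"
  "\<forall>u\<in>set W13. \<forall>v\<in>set W13. u \<noteq> v \<longrightarrow> length (filter (\<lambda>w. detE u v w = (0,0)) W13) = 3"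
  by (simp_all add: W13_def)

lemma W21_ok:
  "\<forall>u\<in>set W21. u \<noteq> ((0,0),(0,0),(0,0))"
  "\<forall>u\<in>set W21. \<forall>v\<in>set W21. u \<noteq> v \<longrightarrow> \<not> parE u v"
  "distinct W21" "length W21 = 9"
  "\<forall>u\<in>set W21. \<forall>v\<in>set W21. u \<noteq> v \<longrightarrow> length (filter (\<lambda>w. detE u v w = (0,0)) W21) = 3"
  by (simp_all add: W21_def)

lemma W22_ok:
  "\<forall>u\<in>set W22. u \<noteq> ((0,0),(0,0),(0,0))"
  "\<forall>u\<in>set W22. \<forall>v\<in>set W22. u \<noteq> v \<longrightarrow> \<not> parE u v"
  "distinct W22" "length W22 = 9"
  "\<forall>u\<in>set W22. \<forall>v\<in>set W22. u \<noteq> v \<longrightarrow> length (filter (\<lambda>w. detE u v w = (0,0)) W22) = 3"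
  by (simp_all add: W22_def)

lemma W23_ok:
  "\<forall>u\<in>set W23. u \<noteq> ((0,0),(0,0),(0,0))"
  "\<forall>u\<in>set W23. \<forall>v\<in>set W23. u \<noteq> v \<longrightarrow> \<not> parE u v"
  "distinct W23" "length W23 = 9"
  "\<forall>u\<in>set W23. \<forall>v\<in>set W23. u \<noteq> v \<longrightarrow> length (filter (\<lambda>w. detE u v w = (0,0)) W23) = 3"
  by (simp_all add: W23_def)

definition Ws :: "EV list list" where "Ws = [W11, W12, W13, W21, W22, W23]"

lemma Ws_ok:
  "\<forall>W\<in>set Ws. \<forall>u\<in>set W. u \<noteq> ((0,0),(0,0),(0,0))"
  "\<forall>W\<in>set Ws. \<forall>u\<in>set W. \<forall>v\<in>set W. u \<noteq> v \<longrightarrow> \<not> parE u v"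
  "\<forall>W\<in>set Ws. distinct W \<and> length W = 9"
  "\<forall>W\<in>set Ws. \<forall>u\<in>set W. \<forall>v\<in>set W. u \<noteq> v \<longrightarrow> length (filter (\<lambda>w. detE u v w = (0,0)) W) = 3"
  using W11_ok W12_ok W13_ok W21_ok W22_ok W23_ok by (simp_all add: Ws_def)

lemma Ws_sep: "\<forall>W\<in>set Ws. \<forall>W'\<in>set Ws. W \<noteq> W' \<longrightarrow> (\<exists>u\<in>set W. \<forall>v\<in>set W'. \<not> parE u v)"
  by (simp add: Ws_def W11_def W12_def W13_def W21_def W22_def W23_def)

lemma Ws_distinct: "distinct Ws" "length Ws = 6"
  by (simp_all add: Ws_def W11_def W12_def W13_def W21_def W22_def W23_def)

lemma phi_ACB: "phi A C B (vec3 x y z) = phi A B C (vec3 x z y)"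
  by (simp add: phi_def lin_def algebra_simps)
lemma phi_BAC: "phi B A C (vec3 x y z) = phi A B C (vec3 y x z)"
  by (simp add: phi_def lin_def algebra_simps)
lemma phi_CAB: "phi C A B (vec3 x y z) = phi A B C (vec3 y z x)"
  by (simp add: phi_def lin_def algebra_simps)
lemma phi_BCA: "phi B C A (vec3 x y z) = phi A B C (vec3 z x y)"
  by (simp add: phi_def lin_def algebra_simps)

lemma det3_perms: "det3 A C B = - det3 A B C" "det3 B A C = - det3 A B C"
  "det3 C A B = det3 A B C" "det3 B C A = det3 A B C"
  by (simp_all add: det3_explicit algebra_simps)

lemma root_cases: assumes "p * p - p + 1 = 0" shows "p = om \<or> p = 1 - om"
proof -
  have "(p - om) * (p - (1 - om)) = p * p - p + (om - om * om)" by (simp add: algebra_simps)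
  also have "\<dots> = 0" using assms om_sq by simp
  finally show ?thesis by simp
qed

lemma ev_simps: "ev (0, 0) = 0" "ev (1, 0) = 1" "ev (0, 1) = om" "ev (1, -1) = 1 - om"
  by simp_all

context
  fixes A B C :: "complex^3"
  assumes D: "det3 A B C \<noteq> 0"
begin

definition Hs where "Hs = (\<lambda>W. phi A B C ` evv ` set W) ` set Ws"

lemma Hs_card: "card Hs = 6"
proof -
  have nz: "evv u \<noteq> 0" if "W \<in> set Ws" "u \<in> set W" for W u using Ws_ok(1) that evv_zero by blast
  have "inj_on (\<lambda>W. phi A B C ` evv ` set W) (set Ws)"
  proof (rule inj_onI, rule ccontr)
    fix W W' assume h: "W \<in> set Ws" "W' \<in> set Ws" "phi A B C ` evv ` set W = phi A B C ` evv ` set W'" "W \<noteq> W'"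
    obtain u where u: "u \<in> set W" "\<forall>v\<in>set W'. \<not> parE u v"
      using Ws_sep[THEN bspec, OF h(1), THEN bspec, OF h(2), THEN mp, OF h(4)] by blast
    have "phi A B C (evv u) \<in> phi A B C ` evv ` set W'" using h(3) u(1) by blast
    then obtain v where v: "v \<in> set W'" "phi A B C (evv u) = phi A B C (evv v)" by blast
    then have "par (evv u) (evv v)" using phi_eq[OF D nz[OF h(1) u(1)] nz[OF h(2) v(1)]] by blast
    then show False using u v par_evv by blast
  qed
  then have "card Hs = card (set Ws)" unfolding Hs_def by (rule card_image)
  also have "\<dots> = 6" using distinct_card[OF Ws_distinct(1)] Ws_distinct(2) by simp
  finally show ?thesis .
qed

lemma Hs_hesse: assumes "S \<in> Hs" shows "hesse_config S"
proof -
  obtain W where W: "W \<in> set Ws" "S = phi A B C ` evv ` set W" using assms unfolding Hs_def by blast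
  have dl: "distinct W \<and> length W = 9" using Ws_ok(3)[THEN bspec, OF W(1)] .
  show ?thesis unfolding W(2)
    by (rule hesse_list[OF D Ws_ok(1)[THEN bspec, OF W(1)] Ws_ok(2)[THEN bspec, OF W(1)] conjunct1[OF dl] conjunct2[OF dl] Ws_ok(4)[THEN bspec, OF W(1)]])
qed

lemma classify:
  "{S. hesse_config S \<and> {phi A B C (vec3 1 0 0), phi A B C (vec3 0 1 0), phi A B C (vec3 0 0 1), phi A B C (vec3 1 1 1)} \<subseteq> S} = Hs"
proof (intro set_eqI iffI)
  fix S assume "S \<in> Hs"
  then obtain W where W: "W \<in> set Ws" "S = phi A B C ` evv ` set W" unfolding Hs_def by blast
  have "{phi A B C (vec3 1 0 0), phi A B C (vec3 0 1 0), phi A B C (vec3 0 0 1), phi A B C (vec3 1 1 1)} \<subseteq> S"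
    using W by (auto simp: Ws_def W11_def W12_def W13_def W21_def W22_def W23_def)
  then show "S \<in> {S. hesse_config S \<and> {phi A B C (vec3 1 0 0), phi A B C (vec3 0 1 0), phi A B C (vec3 0 0 1), phi A B C (vec3 1 1 1)} \<subseteq> S}"
    using Hs_hesse \<open>S \<in> Hs\<close> by blast
next
  fix S assume "S \<in> {S. hesse_config S \<and> {phi A B C (vec3 1 0 0), phi A B C (vec3 0 1 0), phi A B C (vec3 0 0 1), phi A B C (vec3 1 1 1)} \<subseteq> S}"
  then have H: "hesse_config S" and F: "phi A B C (vec3 1 0 0) \<in> S" "phi A B C (vec3 0 1 0) \<in> S" "phi A B C (vec3 0 0 1) \<in> S" "phi A B C (vec3 1 1 1) \<in> S"
    by auto
  have D1: "det3 A C B \<noteq> 0" "det3 B A C \<noteq> 0" "det3 C A B \<noteq> 0" "det3 B C A \<noteq> 0"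
  proof -
    have "det3 A C B = - det3 A B C" "det3 B A C = - det3 A B C" "det3 C A B = det3 A B C" "det3 B C A = det3 A B C"
      by (simp_all add: det3_explicit algebra_simps)
    then show "det3 A C B \<noteq> 0" "det3 B A C \<noteq> 0" "det3 C A B \<noteq> 0" "det3 B C A \<noteq> 0" using D by simp_all
  qed
  have mem: "phi A B C ` evv ` set W \<in> Hs" if "W \<in> set Ws" for W unfolding Hs_def using that by blast
  consider (E1) "phi A B C (vec3 1 1 0) \<in> S"
    | (E2) "phi A B C (vec3 1 0 1) \<in> S" "phi A B C (vec3 1 1 0) \<notin> S"
    | (E3) "phi A B C (vec3 0 1 1) \<in> S" "phi A B C (vec3 1 1 0) \<notin> S" "phi A B C (vec3 1 0 1) \<notin> S"
    using pigeon[OF D H F] by blast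
  then show "S \<in> Hs"
  proof cases
    case E1
    have nE2: "phi A B C (vec3 1 0 1) \<notin> S" using double[OF D H F E1] by blast
    have nE3: "phi A B C (vec3 0 1 1) \<notin> S"
    proof
      assume E3: "phi A B C (vec3 0 1 1) \<in> S"
      show False by (rule double[OF D1(2) H, unfolded phi_BAC]) (use F E1 E3 in simp_all)
    qed
    obtain p where p: "p * p - p + 1 = 0" and S: "S = phi A B C ` {vec3 1 0 0, vec3 0 1 0, vec3 0 0 1, vec3 1 1 1,
     vec3 1 1 0, vec3 1 0 (1 - p), vec3 1 (1 - p) 1, vec3 p 1 1, vec3 0 1 p}"
      using single[OF D H F E1 nE2 nE3] by blast
    from root_cases[OF p] show ?thesis
    proof
      assume "p = om"
      then have "S = phi A B C ` evv ` set W11" using S by (simp add: W11_def)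
      then show ?thesis using mem[of W11] by (simp add: Ws_def)
    next
      assume "p = 1 - om"
      then have "S = phi A B C ` evv ` set W21" using S by (simp add: W21_def)
      then show ?thesis using mem[of W21] by (simp add: Ws_def)
    qed
  next
    case E2
    have nE3: "phi A B C (vec3 0 1 1) \<notin> S"
    proof
      assume E3: "phi A B C (vec3 0 1 1) \<in> S"
      show False by (rule double[OF D1(3) H, unfolded phi_CAB]) (use F E2 E3 in simp_all)
    qed
    have "\<exists>p. p * p - p + 1 = 0 \<and> S = phi A C B ` {vec3 1 0 0, vec3 0 1 0, vec3 0 0 1, vec3 1 1 1,
     vec3 1 1 0, vec3 1 0 (1 - p), vec3 1 (1 - p) 1, vec3 p 1 1, vec3 0 1 p}"
      by (rule single[OF D1(1) H, unfolded phi_ACB]) (use F E2 nE3 in simp_all)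
    then obtain p where p: "p * p - p + 1 = 0" and S: "S = phi A C B ` {vec3 1 0 0, vec3 0 1 0, vec3 0 0 1, vec3 1 1 1,
     vec3 1 1 0, vec3 1 0 (1 - p), vec3 1 (1 - p) 1, vec3 p 1 1, vec3 0 1 p}" by blast
    from root_cases[OF p] show ?thesis
    proof
      assume "p = om"
      then have "S = phi A B C ` evv ` set W12" using S by (simp add: W12_def phi_ACB)
      then show ?thesis using mem[of W12] by (simp add: Ws_def)
    next
      assume "p = 1 - om"
      then have "S = phi A B C ` evv ` set W22" using S by (simp add: W22_def phi_ACB)
      then show ?thesis using mem[of W22] by (simp add: Ws_def)
    qed
  next
    case E3
    have "\<exists>p. p * p - p + 1 = 0 \<and> S = phi B C A ` {vec3 1 0 0, vec3 0 1 0, vec3 0 0 1, vec3 1 1 1,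
     vec3 1 1 0, vec3 1 0 (1 - p), vec3 1 (1 - p) 1, vec3 p 1 1, vec3 0 1 p}"
      by (rule single[OF D1(4) H, unfolded phi_BCA]) (use F E3 in simp_all)
    then obtain p where p: "p * p - p + 1 = 0" and S: "S = phi B C A ` {vec3 1 0 0, vec3 0 1 0, vec3 0 0 1, vec3 1 1 1,
     vec3 1 1 0, vec3 1 0 (1 - p), vec3 1 (1 - p) 1, vec3 p 1 1, vec3 0 1 p}" by blast
    from root_cases[OF p] show ?thesis
    proof
      assume "p = om"
      then have "S = phi A B C ` evv ` set W13" using S by (simp add: W13_def phi_BCA)
      then show ?thesis using mem[of W13] by (simp add: Ws_def)
    next
      assume "p = 1 - om"
      then have "S = phi A B C ` evv ` set W23" using S by (simp add: W23_def phi_BCA)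
      then show ?thesis using mem[of W23] by (simp add: Ws_def)
    qed
  qed
qed

end

theorem mainTheorem3:
  fixes a b c d :: P2
  assumes "\<not> collinear_P2 a b c" and "\<not> collinear_P2 a b d"
      and "\<not> collinear_P2 a c d" and "\<not> collinear_P2 b c d"
  shows "card {S. hesse_config S \<and> {a, b, c, d} \<subseteq> S} = 6"
proof -
  obtain A0 where A0: "A0 \<noteq> 0" "a = pt A0" by (rule P2_cases)
  obtain B0 where B0: "B0 \<noteq> 0" "b = pt B0" by (rule P2_cases)
  obtain C0 where C0: "C0 \<noteq> 0" "c = pt C0" by (rule P2_cases)
  obtain D0 where D0: "D0 \<noteq> 0" "d = pt D0" by (rule P2_cases)
  have n1: "det3 A0 B0 C0 \<noteq> 0" using assms(1) A0 B0 C0 coll_pt by simp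
  have n2: "det3 D0 B0 C0 \<noteq> 0"
  proof
    assume "det3 D0 B0 C0 = 0"
    then have "coll d b c" using coll_pt A0 B0 C0 D0 by simp
    then show False using assms(4) coll_perms(4) by blast
  qed
  have n3: "det3 A0 D0 C0 \<noteq> 0"
  proof
    assume "det3 A0 D0 C0 = 0"
    then have "coll a d c" using coll_pt A0 B0 C0 D0 by simp
    then show False using assms(3) coll_perms(2) by blast
  qed
  have n4: "det3 A0 B0 D0 \<noteq> 0" using assms(2) A0 B0 D0 coll_pt by simp
  define A where "A = det3 D0 B0 C0 *s A0"
  define B where "B = det3 A0 D0 C0 *s B0"
  define C where "C = det3 A0 B0 D0 *s C0"
  have D: "det3 A B C \<noteq> 0" unfolding A_def B_def C_def det3_smult using n1 n2 n3 n4 by simp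
  have ptsc: "pt (k *s v) = pt v" if "k \<noteq> 0" "v \<noteq> 0" for k v
    using pt_eq[of "k *s v" v] that by auto
  have fa: "phi A B C (vec3 1 0 0) = a" unfolding phi_def A0(2)
    by (simp add: lin_def A_def ptsc n2 A0(1))
  have fb: "phi A B C (vec3 0 1 0) = b" unfolding phi_def B0(2)
    by (simp add: lin_def B_def ptsc n3 B0(1))
  have fc: "phi A B C (vec3 0 0 1) = c" unfolding phi_def C0(2)
    by (simp add: lin_def C_def ptsc n4 C0(1))
  have "lin A B C (vec3 1 1 1) = det3 A0 B0 C0 *s D0"
    using cramer_id[of A0 B0 C0 D0] by (simp add: lin_def A_def B_def C_def)
  then have fd: "phi A B C (vec3 1 1 1) = d" unfolding phi_def D0(2) using ptsc n1 D0(1) by simp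
  have "{S. hesse_config S \<and> {a, b, c, d} \<subseteq> S} = Hs A B C"
    using classify[OF D] fa fb fc fd by simp
  then show ?thesis using Hs_card[OF D] by simp
qed

end
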